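(* Consider the downtown bathtub model with and without perimeter control described in the context, with a fixed number $N_s>0$ of suburban commuters. Then: (i) the short-run equilibrium bathtub cost under perimeter control, $C_s^{bp*}$, is uniquely determined, namely (in the controlled regime $\theta^p>2$) $$C_s^{bp*}=\frac{\beta\gamma}{\beta+\gamma}\,\frac{N_s}{n_jv_f/(4L)}+\frac{4\alpha L}{v_f}(1-\ln 2);$$ (ii) the introduction of autonomous vehicles decreases $C_s^{bp*}$: $C_s^{bp*}$ is strictly decreasing in $n_j$ and strictly increasing in $\alpha$, so replacing $(\alpha,n_j)$ by $(\eta\alpha,\xi n_j)$ with $\frac{\beta}{\alpha}<\eta\le1$, $\xi\ge1$, $(\eta,\xi)\neq(1,1)$ strictly decreases it; (iii) hypercongestion mitigation by perimeter control decreases the short-run equilibrium bathtub cost: if the equilibrium without control has $\theta=\frac{C_s^{b*}v_f}{\alpha L}>2$ (hypercongestion), then $C_s^{b*}>C_s^{bp*}$.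
   Context: Downtown traffic: accumulation $n(t)\ge0$, $\dot n=I-G$, outflow $G=nv/L$, $L>0$ trip length, $v=v_f(1-n/n_j)$, $v_f,n_j>0$; travel time $T(t)=L/v(t)$; schedule cost $s(t)=\beta(t^*-t)$ for $t\le t^*$, $\gamma(t-t^* )$ for $t>t^*$; $\alpha,\beta,\gamma>0$. Without control: bathtub cost $C_s^b(t)=\alpha T(t)+s(t)$; a short-run equilibrium is $(n(\cdot),C_s^{b*})$ with $C_s^b(t)=C_s^{b*}$ when $n(t)>0$, $\ge C_s^{b*}$ when $n(t)=0$, and $\int n v/L\,dt=N_s$; it satisfies $N_s=\alpha n_j(\frac1\beta+\frac1\gamma)(\ln\theta+\frac1\theta-1)$ with $\theta=C_s^{b*}v_f/(\alpha L)$. Perimeter control: inflow $I(t)=I_p:=n_jv_f/(4L)$ when $n(t)=n_j/2$, and equal to the boundary arrival rate when $n(t)<n_j/2$; excess vehicles wait in a FIFO point queue, with waiting time $T_w(t)=q(t)/I_p$ for queue length $q(t)$ met by the commuter arriving at $t$; during the control period $[t_s^p,t_e^p]$ downtown travel time is $T^p(t)=2L/v_f+T_w(t)$, otherwise $T^p(t)=T(t)$; bathtub cost $C_s^{bp}(t)=\alpha T^p(t)+s(t)$; equilibrium $(n,q,C_s^{bp*})$ with $C_s^{bp}(t)=C_s^{bp*}$ when $n(t)>0$, $\ge$ when $n(t)=0$, $n(t)=n_j/2$ when $q(t)>0$, $n(t)\le n_j/2$ when $q(t)=0$, and $\int nv/L\,dt=N_s$; $\theta^p=C_s^{bp*}v_f/(\alpha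 L)$. Autonomous vehicles: $\alpha\mapsto\eta\alpha$, $n_j\mapsto\xi n_j$. *)

theory Defs
  imports "HOL-Analysis.Analysis"
begin

definition speed :: "real \<Rightarrow> real \<Rightarrow> real \<Rightarrow> real" where
  "speed vf nj x = vf * (1 - x / nj)"

definition sched :: "real \<Rightarrow> real \<Rightarrow> real \<Rightarrow> real \<Rightarrow> real" where
  "sched \<beta> \<gamma> tstar t = (if t \<le> tstar then \<beta> * (tstar - t) else \<gamma> * (t - tstar))"

definition Ip :: "real \<Rightarrow> real \<Rightarrow> real \<Rightarrow> real" where
  "Ip L vf nj = nj * vf / (4 * L)"

definition travel_time :: "real \<Rightarrow> real \<Rightarrow> real \<Rightarrow> (real \<Rightarrow> real) \<Rightarrow> real \<Rightarrow> real" where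
  "travel_time L vf nj n t = L / speed vf nj (n t)"

definition bathtub_cost ::
  "real \<Rightarrow> real \<Rightarrow> real \<Rightarrow> real \<Rightarrow> real \<Rightarrow> real \<Rightarrow> real \<Rightarrow> (real \<Rightarrow> real) \<Rightarrow> real \<Rightarrow> real" where
  "bathtub_cost \<alpha> \<beta> \<gamma> L vf nj tstar n t =
     \<alpha> * travel_time L vf nj n t + sched \<beta> \<gamma> tstar t"

definition bathtub_eq ::
  "real \<Rightarrow> real \<Rightarrow> real \<Rightarrow> real \<Rightarrow> real \<Rightarrow> real \<Rightarrow> real \<Rightarrow> real \<Rightarrow> (real \<Rightarrow> real) \<Rightarrow> real \<Rightarrow> bool" where
  "bathtub_eq \<alpha> \<beta> \<gamma> L vf nj tstar Ns n C \<longleftrightarrow>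
     (\<forall>t. 0 \<le> n t \<and> n t < nj) \<and>
     (\<forall>t. n t > 0 \<longrightarrow> bathtub_cost \<alpha> \<beta> \<gamma> L vf nj tstar n t = C) \<and>
     (\<forall>t. n t = 0 \<longrightarrow> bathtub_cost \<alpha> \<beta> \<gamma> L vf nj tstar n t \<ge> C) \<and>
     ((\<lambda>t. n t * speed vf nj (n t) / L) has_integral Ns) UNIV"

text \<open>Travel time under perimeter control. The control period is the period during which
  the inflow is metered, i.e. during which n(t) = n_j/2; there T^p = 2L/v_f + q(t)/I_p.\<close>
definition travel_time_p ::
  "real \<Rightarrow> real \<Rightarrow> real \<Rightarrow> (real \<Rightarrow> real) \<Rightarrow> (real \<Rightarrow> real) \<Rightarrow> real \<Rightarrow> real" where
  "travel_time_p L vf nj n q t =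
     (if n t = nj / 2 then 2 * L / vf + q t / Ip L vf nj else travel_time L vf nj n t)"

definition bathtub_cost_p ::
  "real \<Rightarrow> real \<Rightarrow> real \<Rightarrow> real \<Rightarrow> real \<Rightarrow> real \<Rightarrow> real \<Rightarrow> (real \<Rightarrow> real) \<Rightarrow> (real \<Rightarrow> real) \<Rightarrow> real \<Rightarrow> real" where
  "bathtub_cost_p \<alpha> \<beta> \<gamma> L vf nj tstar n q t =
     \<alpha> * travel_time_p L vf nj n q t + sched \<beta> \<gamma> tstar t"

definition bathtub_eq_p ::
  "real \<Rightarrow> real \<Rightarrow> real \<Rightarrow> real \<Rightarrow> real \<Rightarrow> real \<Rightarrow> real \<Rightarrow> real \<Rightarrow> (real \<Rightarrow> real) \<Rightarrow> (real \<Rightarrow> real) \<Rightarrow> real \<Rightarrow> bool" where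
  "bathtub_eq_p \<alpha> \<beta> \<gamma> L vf nj tstar Ns n q C \<longleftrightarrow>
     (\<forall>t. 0 \<le> n t) \<and> (\<forall>t. 0 \<le> q t) \<and>
     (\<forall>t. n t > 0 \<longrightarrow> bathtub_cost_p \<alpha> \<beta> \<gamma> L vf nj tstar n q t = C) \<and>
     (\<forall>t. n t = 0 \<longrightarrow> bathtub_cost_p \<alpha> \<beta> \<gamma> L vf nj tstar n q t \<ge> C) \<and>
     (\<forall>t. q t > 0 \<longrightarrow> n t = nj / 2) \<and>
     (\<forall>t. q t = 0 \<longrightarrow> n t \<le> nj / 2) \<and>
     ((\<lambda>t. n t * speed vf nj (n t) / L) has_integral Ns) UNIV"

definition Cbp_formula :: "real \<Rightarrow> real \<Rightarrow> real \<Rightarrow> real \<Rightarrow> real \<Rightarrow> real \<Rightarrow> real \<Rightarrow> real" where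
  "Cbp_formula \<alpha> \<beta> \<gamma> L vf nj Ns =
     \<beta> * \<gamma> / (\<beta> + \<gamma>) * (Ns / Ip L vf nj) + 4 * \<alpha> * L / vf * (1 - ln 2)"

end

theory Submission
  imports Defs
begin

lemma early_int:
  fixes f H g :: "real \<Rightarrow> real"
  assumes b: "\<beta> > 0" and lh: "lo \<le> hi"
    and der: "\<And>x. x \<in> {lo..hi} \<Longrightarrow> (H has_real_derivative f x) (at x)"
    and geq: "\<And>t. t \<in> {ts-(C-lo)/\<beta> .. ts-(C-hi)/\<beta>} \<Longrightarrow> g t = f (C - \<beta>*(ts - t))"
  shows "(g has_integral (H hi - H lo)/\<beta>) {ts-(C-lo)/\<beta> .. ts-(C-hi)/\<beta>}"
proof -
  define F where "F t = H (C - \<beta>*(ts - t)) / \<beta>" for t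
  have le: "ts-(C-lo)/\<beta> \<le> ts-(C-hi)/\<beta>" using b lh by (simp add: divide_right_mono)
  have "((\<lambda>t. f (C - \<beta>*(ts - t))) has_integral (F (ts-(C-hi)/\<beta>) - F (ts-(C-lo)/\<beta>))) {ts-(C-lo)/\<beta> .. ts-(C-hi)/\<beta>}"
  proof (rule fundamental_theorem_of_calculus[OF le])
    fix t assume t: "t \<in> {ts-(C-lo)/\<beta> .. ts-(C-hi)/\<beta>}"
    have inr: "C - \<beta>*(ts - t) \<in> {lo..hi}"
    proof -
      have "ts - t \<le> (C-lo)/\<beta>" "(C-hi)/\<beta> \<le> ts - t" using t by auto
      hence "\<beta>*(ts - t) \<le> C - lo" "C - hi \<le> \<beta>*(ts-t)" using b by (auto simp: field_simps)
      thus ?thesis by auto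
    qed
    have d1: "((\<lambda>t. C - \<beta>*(ts - t)) has_real_derivative \<beta>) (at t)"
      by (auto intro!: derivative_eq_intros)
    have "((\<lambda>t. H (C - \<beta>*(ts - t))) has_real_derivative f (C - \<beta>*(ts - t)) * \<beta>) (at t)"
      using DERIV_chain2[OF der[OF inr] d1] .
    hence "(F has_real_derivative f (C - \<beta>*(ts - t))) (at t)"
      unfolding F_def using b by (auto intro!: derivative_eq_intros)
    thus "(F has_vector_derivative f (C - \<beta>*(ts - t))) (at t within {ts-(C-lo)/\<beta> .. ts-(C-hi)/\<beta>})"
      using has_real_derivative_iff_has_vector_derivative has_field_derivative_at_within by blast
  qed
  moreover have "F (ts-(C-hi)/\<beta>) - F (ts-(C-lo)/\<beta>) = (H hi - H lo)/\<beta>"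
  proof -
    have "\<beta>*((C-hi)/\<beta>) = C - hi" "\<beta>*((C-lo)/\<beta>) = C - lo" using b by simp_all
    hence "C - \<beta>*(ts - (ts-(C-hi)/\<beta>)) = hi" "C - \<beta>*(ts - (ts-(C-lo)/\<beta>)) = lo" by simp_all
    thus ?thesis unfolding F_def by (simp only: diff_divide_distrib)
  qed
  ultimately have I: "((\<lambda>t. f (C - \<beta>*(ts - t))) has_integral (H hi - H lo)/\<beta>) {ts-(C-lo)/\<beta> .. ts-(C-hi)/\<beta>}" by simp
  show ?thesis by (rule has_integral_eq[OF _ I]) (simp add: geq)
qed

lemma late_int:
  fixes f H g :: "real \<Rightarrow> real"
  assumes b: "\<gamma> > 0" and lh: "lo \<le> hi"
    and der: "\<And>x. x \<in> {lo..hi} \<Longrightarrow> (H has_real_derivative f x) (at x)"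
    and geq: "\<And>t. t \<in> {ts+(C-hi)/\<gamma> .. ts+(C-lo)/\<gamma>} \<Longrightarrow> g t = f (C - \<gamma>*(t - ts))"
  shows "(g has_integral (H hi - H lo)/\<gamma>) {ts+(C-hi)/\<gamma> .. ts+(C-lo)/\<gamma>}"
proof -
  define F where "F t = - H (C - \<gamma>*(t - ts)) / \<gamma>" for t
  have le: "ts+(C-hi)/\<gamma> \<le> ts+(C-lo)/\<gamma>" using b lh by (simp add: divide_right_mono)
  have "((\<lambda>t. f (C - \<gamma>*(t - ts))) has_integral (F (ts+(C-lo)/\<gamma>) - F (ts+(C-hi)/\<gamma>))) {ts+(C-hi)/\<gamma> .. ts+(C-lo)/\<gamma>}"
  proof (rule fundamental_theorem_of_calculus[OF le])
    fix t assume t: "t \<in> {ts+(C-hi)/\<gamma> .. ts+(C-lo)/\<gamma>}"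
    have inr: "C - \<gamma>*(t - ts) \<in> {lo..hi}"
    proof -
      have "t - ts \<le> (C-lo)/\<gamma>" "(C-hi)/\<gamma> \<le> t - ts" using t by auto
      hence "\<gamma>*(t - ts) \<le> C - lo" "C - hi \<le> \<gamma>*(t - ts)" using b by (auto simp: field_simps)
      thus ?thesis by auto
    qed
    have d1: "((\<lambda>t. C - \<gamma>*(t - ts)) has_real_derivative (-\<gamma>)) (at t)"
      by (auto intro!: derivative_eq_intros)
    have "((\<lambda>t. H (C - \<gamma>*(t - ts))) has_real_derivative f (C - \<gamma>*(t - ts)) * (-\<gamma>)) (at t)"
      using DERIV_chain2[OF der[OF inr] d1] .
    hence "(F has_real_derivative f (C - \<gamma>*(t - ts))) (at t)"
      unfolding F_def using b by (auto intro!: derivative_eq_intros)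
    thus "(F has_vector_derivative f (C - \<gamma>*(t - ts))) (at t within {ts+(C-hi)/\<gamma> .. ts+(C-lo)/\<gamma>})"
      using has_real_derivative_iff_has_vector_derivative has_field_derivative_at_within by blast
  qed
  moreover have "F (ts+(C-lo)/\<gamma>) - F (ts+(C-hi)/\<gamma>) = (H hi - H lo)/\<gamma>"
  proof -
    have "\<gamma>*((C-hi)/\<gamma>) = C - hi" "\<gamma>*((C-lo)/\<gamma>) = C - lo" using b by simp_all
    hence "C - \<gamma>*((ts+(C-hi)/\<gamma>) - ts) = hi" "C - \<gamma>*((ts+(C-lo)/\<gamma>) - ts) = lo" by simp_all
    thus ?thesis unfolding F_def by (simp add: diff_divide_distrib)
  qed
  ultimately have I: "((\<lambda>t. f (C - \<gamma>*(t - ts))) has_integral (H hi - H lo)/\<gamma>) {ts+(C-hi)/\<gamma> .. ts+(C-lo)/\<gamma>}" by simp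
  show ?thesis by (rule has_integral_eq[OF _ I]) (simp add: geq)
qed


lemma sched_early: "t \<le> ts \<Longrightarrow> sched \<beta> \<gamma> ts t = \<beta>*(ts - t)"
  by (simp add: sched_def)
lemma sched_late: "ts \<le> t \<Longrightarrow> sched \<beta> \<gamma> ts t = \<gamma>*(t - ts)"
  by (auto simp add: sched_def)

lemma assemble:
  fixes P Ha Hb g :: "real \<Rightarrow> real"
  assumes b: "\<beta> > 0" and c: "\<gamma> > 0" and ord: "lo \<le> m" "m \<le> C"
    and zero: "\<And>x. x \<le> lo \<Longrightarrow> P x = 0"
    and d1: "\<And>x. x \<in> {lo..m} \<Longrightarrow> (Ha has_real_derivative P x) (at x)"
    and d2: "\<And>x. x \<in> {m..C} \<Longrightarrow> (Hb has_real_derivative P x) (at x)"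
    and geq: "\<And>t. g t = P (C - sched \<beta> \<gamma> ts t)"
  shows "(g has_integral (1/\<beta> + 1/\<gamma>) * (Ha m - Ha lo + Hb C - Hb m)) UNIV"
proof -
  define T1 where "T1 = ts-(C-lo)/\<beta>"
  define T2 where "T2 = ts-(C-m)/\<beta>"
  define T3 where "T3 = ts+(C-m)/\<gamma>"
  define T4 where "T4 = ts+(C-lo)/\<gamma>"
  have o12: "T1 \<le> T2" unfolding T1_def T2_def using b ord by (simp add: divide_right_mono)
  have o2s: "T2 \<le> ts" unfolding T2_def using b ord by simp
  have os3: "ts \<le> T3" unfolding T3_def using c ord by simp
  have o34: "T3 \<le> T4" unfolding T3_def T4_def using c ord by (simp add: divide_right_mono)
  have i1: "(g has_integral (Ha m - Ha lo)/\<beta>) {T1..T2}"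
    unfolding T1_def T2_def
    by (rule early_int[OF b ord(1) d1]) (use o2s in \<open>auto simp: geq T2_def sched_early\<close>)
  have i2: "(g has_integral (Hb C - Hb m)/\<beta>) {T2..ts}"
  proof -
    have "(g has_integral (Hb C - Hb m)/\<beta>) {ts-(C-m)/\<beta> .. ts-(C-C)/\<beta>}"
      by (rule early_int[OF b ord(2) d2]) (auto simp: geq sched_early)
    thus ?thesis unfolding T2_def by simp
  qed
  have i3: "(g has_integral (Hb C - Hb m)/\<gamma>) {ts..T3}"
  proof -
    have "(g has_integral (Hb C - Hb m)/\<gamma>) {ts+(C-C)/\<gamma> .. ts+(C-m)/\<gamma>}"
      by (rule late_int[OF c ord(2) d2]) (auto simp: geq sched_late)
    thus ?thesis unfolding T3_def by simp
  qed
  have i4: "(g has_integral (Ha m - Ha lo)/\<gamma>) {T3..T4}"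
    unfolding T3_def T4_def
    by (rule late_int[OF c ord(1) d1]) (use os3 in \<open>auto simp: geq T3_def sched_late\<close>)
  have "(g has_integral ((Ha m - Ha lo)/\<beta> + (Hb C - Hb m)/\<beta>) + ((Hb C - Hb m)/\<gamma> + (Ha m - Ha lo)/\<gamma>)) {T1..T4}"
    by (rule has_integral_combine[OF order_trans[OF o12 o2s] order_trans[OF os3 o34]
          has_integral_combine[OF o12 o2s i1 i2] has_integral_combine[OF os3 o34 i3 i4]])
  moreover have "((Ha m - Ha lo)/\<beta> + (Hb C - Hb m)/\<beta>) + ((Hb C - Hb m)/\<gamma> + (Ha m - Ha lo)/\<gamma>)
     = (1/\<beta> + 1/\<gamma>) * (Ha m - Ha lo + Hb C - Hb m)"
    using b c by (simp add: field_simps)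
  ultimately have I: "(g has_integral (1/\<beta> + 1/\<gamma>) * (Ha m - Ha lo + Hb C - Hb m)) {T1..T4}" by simp
  show ?thesis
  proof (rule has_integral_on_superset[OF I])
    fix t assume "t \<notin> {T1..T4}"
    hence "t < T1 \<or> t > T4" by auto
    thus "g t = 0"
    proof
      assume "t < T1"
      hence t1: "t \<le> ts" "ts - t > (C-lo)/\<beta>" using o12 o2s unfolding T1_def by auto
      hence "sched \<beta> \<gamma> ts t = \<beta>*(ts - t)" by (simp add: sched_early)
      moreover have "C - lo < (ts - t) * \<beta>" using t1(2) b by (simp add: pos_divide_less_eq)
      ultimately have "C - sched \<beta> \<gamma> ts t < lo" by (simp add: mult.commute)
      thus ?thesis using zero[of "C - sched \<beta> \<gamma> ts t"] geq[of t] by simp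
    next
      assume "t > T4"
      hence t1: "t \<ge> ts" "t - ts > (C-lo)/\<gamma>" using os3 o34 unfolding T4_def by auto
      hence "sched \<beta> \<gamma> ts t = \<gamma>*(t - ts)" by (simp add: sched_late)
      moreover have "C - lo < (t - ts) * \<gamma>" using t1(2) c by (simp add: pos_divide_less_eq)
      ultimately have "C - sched \<beta> \<gamma> ts t < lo" by (simp add: mult.commute)
      thus ?thesis using zero[of "C - sched \<beta> \<gamma> ts t"] geq[of t] by simp
    qed
  qed auto
qed


definition Mf :: "real \<Rightarrow> real \<Rightarrow> real \<Rightarrow> real \<Rightarrow> real \<Rightarrow> real" where
  "Mf \<alpha> L vf nj x = nj*\<alpha>*(1/x - (\<alpha>*L/vf)/x^2)"
definition Hm :: "real \<Rightarrow> real \<Rightarrow> real \<Rightarrow> real \<Rightarrow> real \<Rightarrow> real" where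
  "Hm \<alpha> L vf nj x = nj*\<alpha>*(ln x + (\<alpha>*L/vf)/x)"
definition Pp :: "real \<Rightarrow> real \<Rightarrow> real \<Rightarrow> real \<Rightarrow> real \<Rightarrow> real" where
  "Pp \<alpha> L vf nj x = (if x \<le> \<alpha>*L/vf then 0 else if x \<le> 2*(\<alpha>*L/vf) then Mf \<alpha> L vf nj x else Ip L vf nj)"
definition Pb :: "real \<Rightarrow> real \<Rightarrow> real \<Rightarrow> real \<Rightarrow> real \<Rightarrow> real" where
  "Pb \<alpha> L vf nj x = (if x \<le> \<alpha>*L/vf then 0 else Mf \<alpha> L vf nj x)"

lemma Hgen_deriv:
  fixes k c x :: real
  assumes "x > 0"
  shows "((\<lambda>x. k*(ln x + c/x)) has_real_derivative k*(1/x - c/x^2)) (at x)"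
  using assms
  by (auto intro!: derivative_eq_intros simp: power2_eq_square field_simps)

lemma Hm_deriv:
  assumes "x > 0"
  shows "(Hm \<alpha> L vf nj has_real_derivative Mf \<alpha> L vf nj x) (at x)"
  unfolding Hm_def[abs_def] Mf_def by (rule Hgen_deriv[OF assms])

lemma mid_alg:
  fixes \<alpha> L vf nj nn :: real
  assumes pos: "\<alpha> > 0" "L > 0" "vf > 0" "nj > 0" and nn: "0 \<le> nn" "nn < nj"
  shows "nn * speed vf nj nn / L = Mf \<alpha> L vf nj ((\<alpha>*L/vf) / (1 - nn/nj))"
proof -
  define r where "r = 1 - nn/nj"
  define a where "a = \<alpha>*L/vf"
  have r0: "r > 0" unfolding r_def using nn pos by (simp add: field_simps)
  have a0: "a > 0" unfolding a_def using pos by simp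
  have nnr: "nn = nj*(1-r)" unfolding r_def using pos by (simp add: field_simps)
  have "Mf \<alpha> L vf nj (a/r) = nj*\<alpha>*(r/a - r^2/a)"
    unfolding Mf_def a_def[symmetric] using r0 a0 by (simp add: field_simps power2_eq_square)
  also have "\<dots> = nj*(1-r)*(vf*r)/L"
    unfolding a_def using pos by (simp add: field_simps power2_eq_square)
  also have "\<dots> = nn * speed vf nj nn / L"
    unfolding speed_def r_def[symmetric] nnr by simp
  finally show ?thesis unfolding a_def r_def by simp
qed


lemma Mf_2a:
  assumes pos: "\<alpha> > 0" "L > 0" "vf > 0" "nj > 0"
  shows "Mf \<alpha> L vf nj (2*(\<alpha>*L/vf)) = Ip L vf nj"
  unfolding Mf_def Ip_def using pos by (simp add: field_simps power2_eq_square)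

lemma outflow_p:
  assumes pos: "\<alpha> > 0" "L > 0" "vf > 0" "nj > 0"
    and eq: "bathtub_eq_p \<alpha> \<beta> \<gamma> L vf nj ts Ns n q C"
  shows "n t * speed vf nj (n t) / L = Pp \<alpha> L vf nj (C - sched \<beta> \<gamma> ts t)"
proof -
  define a where "a = \<alpha>*L/vf"
  define x where "x = C - sched \<beta> \<gamma> ts t"
  have a0: "a > 0" unfolding a_def using pos by simp
  have Ip0: "Ip L vf nj > 0" unfolding Ip_def using pos by simp
  have n0: "n t \<ge> 0" and q0: "q t \<ge> 0" and nle: "n t \<le> nj/2"
    using eq unfolding bathtub_eq_p_def by (auto, metis less_eq_real_def order_refl)
  consider "n t = 0" | "n t = nj/2" | "0 < n t" "n t < nj/2" using n0 nle by linarith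
  then show ?thesis
  proof cases
    case 1
    hence "bathtub_cost_p \<alpha> \<beta> \<gamma> L vf nj ts n q t \<ge> C" using eq unfolding bathtub_eq_p_def by auto
    moreover have "travel_time_p L vf nj n q t = L/vf"
      using 1 pos unfolding travel_time_p_def travel_time_def speed_def by simp
    ultimately have "\<alpha>*(L/vf) + sched \<beta> \<gamma> ts t \<ge> C" unfolding bathtub_cost_p_def by simp
    hence "x \<le> a" unfolding x_def a_def by simp
    thus ?thesis using 1 unfolding Pp_def x_def[symmetric] a_def[symmetric] by simp
  next
    case 2
    hence "n t > 0" using pos by simp
    hence "bathtub_cost_p \<alpha> \<beta> \<gamma> L vf nj ts n q t = C" using eq unfolding bathtub_eq_p_def by auto
    moreover have "travel_time_p L vf nj n q t = 2*L/vf + q t / Ip L vf nj"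
      using 2 unfolding travel_time_p_def by simp
    ultimately have "\<alpha>*(2*L/vf + q t / Ip L vf nj) + sched \<beta> \<gamma> ts t = C" unfolding bathtub_cost_p_def by simp
    hence "x = 2*a + \<alpha>*(q t / Ip L vf nj)" unfolding x_def a_def by (simp add: algebra_simps)
    moreover have "\<alpha>*(q t / Ip L vf nj) \<ge> 0" using pos q0 Ip0 by simp
    ultimately have x2: "x \<ge> 2*a" by simp
    have lhs: "n t * speed vf nj (n t) / L = Ip L vf nj"
      unfolding 2 speed_def Ip_def using pos by (simp add: field_simps)
    show ?thesis
    proof (cases "x \<le> 2*a")
      case True
      hence "x = 2*a" using x2 by simp
      thus ?thesis using lhs a0 Mf_2a[OF pos] unfolding Pp_def x_def[symmetric] a_def[symmetric] by simp
    next
      case False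
      thus ?thesis using lhs a0 unfolding Pp_def x_def[symmetric] a_def[symmetric] by simp
    qed
  next
    case 3
    hence "bathtub_cost_p \<alpha> \<beta> \<gamma> L vf nj ts n q t = C" using eq unfolding bathtub_eq_p_def by auto
    moreover have "travel_time_p L vf nj n q t = L / (vf * (1 - n t/nj))"
      using 3 unfolding travel_time_p_def travel_time_def speed_def by simp
    ultimately have "\<alpha>*(L / (vf * (1 - n t/nj))) + sched \<beta> \<gamma> ts t = C" unfolding bathtub_cost_p_def by simp
    hence xe: "x = a / (1 - n t/nj)" unfolding x_def a_def by (simp add: algebra_simps)
    have r1: "1 - n t/nj > 1/2" "1 - n t/nj < 1" using 3 pos by (auto simp: field_simps)
    have "a * (1 - n t/nj) < a" using a0 r1 by simp
    moreover have "1 - n t/nj > 0" using r1 by linarith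
    ultimately have "x > a" unfolding xe by (simp add: pos_less_divide_eq)
    moreover have "x < 2*a"
    proof -
      have "a / (1 - n t/nj) < a / (1/2)" 
        apply (rule divide_strict_left_mono)
        using a0 r1 apply (linarith, linarith)
        apply (rule mult_pos_pos) using r1 by linarith+
      thus ?thesis unfolding xe by simp
    qed
    ultimately have "Pp \<alpha> L vf nj x = Mf \<alpha> L vf nj x" unfolding Pp_def a_def[symmetric] by simp
    moreover have "n t * speed vf nj (n t) / L = Mf \<alpha> L vf nj x"
      unfolding xe a_def by (rule mid_alg[OF pos]) (use 3 pos in auto)
    ultimately show ?thesis unfolding x_def by simp
  qed
qed

lemma outflow_b:
  assumes pos: "\<alpha> > 0" "L > 0" "vf > 0" "nj > 0"
    and eq: "bathtub_eq \<alpha> \<beta> \<gamma> L vf nj ts Ns n C"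
  shows "n t * speed vf nj (n t) / L = Pb \<alpha> L vf nj (C - sched \<beta> \<gamma> ts t)"
proof -
  define a where "a = \<alpha>*L/vf"
  define x where "x = C - sched \<beta> \<gamma> ts t"
  have a0: "a > 0" unfolding a_def using pos by simp
  have n0: "n t \<ge> 0" and nle: "n t < nj"
    using eq unfolding bathtub_eq_def by auto
  consider "n t = 0" | "0 < n t" using n0 by linarith
  then show ?thesis
  proof cases
    case 1
    hence "bathtub_cost \<alpha> \<beta> \<gamma> L vf nj ts n t \<ge> C" using eq unfolding bathtub_eq_def by auto
    moreover have "travel_time L vf nj n t = L/vf"
      using 1 pos unfolding travel_time_def speed_def by simp
    ultimately have "\<alpha>*(L/vf) + sched \<beta> \<gamma> ts t \<ge> C" unfolding bathtub_cost_def by simp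
    hence "x \<le> a" unfolding x_def a_def by simp
    thus ?thesis using 1 unfolding Pb_def x_def[symmetric] a_def[symmetric] by simp
  next
    case 2
    hence "bathtub_cost \<alpha> \<beta> \<gamma> L vf nj ts n t = C" using eq unfolding bathtub_eq_def by auto
    moreover have "travel_time L vf nj n t = L / (vf * (1 - n t/nj))"
      unfolding travel_time_def speed_def by simp
    ultimately have "\<alpha>*(L / (vf * (1 - n t/nj))) + sched \<beta> \<gamma> ts t = C" unfolding bathtub_cost_def by simp
    hence xe: "x = a / (1 - n t/nj)" unfolding x_def a_def by (simp add: algebra_simps)
    have r1: "1 - n t/nj > 0" "1 - n t/nj < 1" using 2 nle pos by (auto simp: field_simps)
    have "a * (1 - n t/nj) < a" using a0 r1 by simp
    moreover have "1 - n t/nj > 0" using r1 by linarith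
    ultimately have "x > a" unfolding xe by (simp add: pos_less_divide_eq)
    hence "Pb \<alpha> L vf nj x = Mf \<alpha> L vf nj x" unfolding Pb_def a_def[symmetric] by simp
    moreover have "n t * speed vf nj (n t) / L = Mf \<alpha> L vf nj x"
      unfolding xe a_def by (rule mid_alg[OF pos]) (use 2 nle in auto)
    ultimately show ?thesis unfolding x_def by simp
  qed
qed


lemma Mf_a:
  assumes pos: "\<alpha> > 0" "L > 0" "vf > 0" "nj > 0"
  shows "Mf \<alpha> L vf nj (\<alpha>*L/vf) = 0"
  unfolding Mf_def using pos by (simp add: field_simps power2_eq_square)

lemma sched_nonneg: "\<beta> > 0 \<Longrightarrow> \<gamma> > 0 \<Longrightarrow> sched \<beta> \<gamma> ts t \<ge> 0"
  by (simp add: sched_def)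

lemma int_p_high:
  assumes pos: "\<alpha> > 0" "L > 0" "vf > 0" "nj > 0" and b: "\<beta> > 0" and c: "\<gamma> > 0"
    and eq: "bathtub_eq_p \<alpha> \<beta> \<gamma> L vf nj ts Ns n q C"
    and C: "C > 2*(\<alpha>*L/vf)"
  shows "Ns = (1/\<beta> + 1/\<gamma>) * (Hm \<alpha> L vf nj (2*(\<alpha>*L/vf)) - Hm \<alpha> L vf nj (\<alpha>*L/vf)
      + Ip L vf nj * C - Ip L vf nj * (2*(\<alpha>*L/vf)))"
proof -
  define a where "a = \<alpha>*L/vf"
  have a0: "a > 0" unfolding a_def using pos by simp
  have "((\<lambda>t. n t * speed vf nj (n t) / L) has_integral (1/\<beta> + 1/\<gamma>) *
      (Hm \<alpha> L vf nj (2*a) - Hm \<alpha> L vf nj a + Ip L vf nj * C - Ip L vf nj * (2*a))) UNIV"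
  proof (rule assemble[OF b c, where P="Pp \<alpha> L vf nj"])
    show "a \<le> 2*a" using a0 by simp
    show "2*a \<le> C" using C a_def by simp
    show "Pp \<alpha> L vf nj x = 0" if "x \<le> a" for x using that unfolding Pp_def a_def by simp
    show "(Hm \<alpha> L vf nj has_real_derivative Pp \<alpha> L vf nj x) (at x)" if "x \<in> {a..2*a}" for x
    proof -
      have "Pp \<alpha> L vf nj x = Mf \<alpha> L vf nj x"
        using that Mf_a[OF pos] unfolding Pp_def a_def[symmetric] by (cases "x = a") auto
      thus ?thesis using Hm_deriv[of x] that a0 by simp
    qed
    show "((\<lambda>x. Ip L vf nj * x) has_real_derivative Pp \<alpha> L vf nj x) (at x)" if "x \<in> {2*a..C}" for x
    proof -
      have "Pp \<alpha> L vf nj x = Ip L vf nj"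
        using that a0 Mf_2a[OF pos] unfolding Pp_def a_def[symmetric] by (cases "x = 2*a") auto
      thus ?thesis by (auto intro!: derivative_eq_intros)
    qed
    show "n t * speed vf nj (n t) / L = Pp \<alpha> L vf nj (C - sched \<beta> \<gamma> ts t)" for t
      by (rule outflow_p[OF pos eq])
  qed
  moreover have "((\<lambda>t. n t * speed vf nj (n t) / L) has_integral Ns) UNIV"
    using eq unfolding bathtub_eq_p_def by blast
  ultimately show ?thesis unfolding a_def using has_integral_unique by blast
qed

lemma int_p_low:
  assumes pos: "\<alpha> > 0" "L > 0" "vf > 0" "nj > 0" and b: "\<beta> > 0" and c: "\<gamma> > 0"
    and eq: "bathtub_eq_p \<alpha> \<beta> \<gamma> L vf nj ts Ns n q C"
    and C: "C > \<alpha>*L/vf" "C \<le> 2*(\<alpha>*L/vf)"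
  shows "Ns = (1/\<beta> + 1/\<gamma>) * (Hm \<alpha> L vf nj C - Hm \<alpha> L vf nj (\<alpha>*L/vf))"
proof -
  define a where "a = \<alpha>*L/vf"
  have a0: "a > 0" unfolding a_def using pos by simp
  have der: "(Hm \<alpha> L vf nj has_real_derivative Pp \<alpha> L vf nj x) (at x)" if "x \<in> {a..C}" for x
  proof -
    have "Pp \<alpha> L vf nj x = Mf \<alpha> L vf nj x"
      using that C Mf_a[OF pos] unfolding Pp_def a_def[symmetric] by (cases "x = a") auto
    thus ?thesis using Hm_deriv[of x] that a0 by simp
  qed
  have "((\<lambda>t. n t * speed vf nj (n t) / L) has_integral (1/\<beta> + 1/\<gamma>) *
      (Hm \<alpha> L vf nj C - Hm \<alpha> L vf nj a + Hm \<alpha> L vf nj C - Hm \<alpha> L vf nj C)) UNIV" (is "(?g has_integral ?v) UNIV")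
  proof (rule assemble[OF b c, where P="Pp \<alpha> L vf nj" and m=C and lo=a and Ha="Hm \<alpha> L vf nj" and Hb="Hm \<alpha> L vf nj"])
    show "a \<le> C" using C a_def by simp
    show "C \<le> C" by simp
    show "Pp \<alpha> L vf nj x = 0" if "x \<le> a" for x using that unfolding Pp_def a_def by simp
    show "(Hm \<alpha> L vf nj has_real_derivative Pp \<alpha> L vf nj x) (at x)" if "x \<in> {a..C}" for x
      using der that by blast
    show "(Hm \<alpha> L vf nj has_real_derivative Pp \<alpha> L vf nj x) (at x)" if "x \<in> {C..C}" for x
    proof -
      have "x \<in> {a..C}" using that C unfolding a_def by simp
      thus ?thesis by (rule der)
    qed
    show "n t * speed vf nj (n t) / L = Pp \<alpha> L vf nj (C - sched \<beta> \<gamma> ts t)" for t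
      by (rule outflow_p[OF pos eq])
  qed
  moreover have "((\<lambda>t. n t * speed vf nj (n t) / L) has_integral Ns) UNIV"
    using eq unfolding bathtub_eq_p_def by blast
  ultimately have "Ns = ?v" using has_integral_unique by blast
  thus ?thesis unfolding a_def by simp
qed

lemma int_b:
  assumes pos: "\<alpha> > 0" "L > 0" "vf > 0" "nj > 0" and b: "\<beta> > 0" and c: "\<gamma> > 0"
    and eq: "bathtub_eq \<alpha> \<beta> \<gamma> L vf nj ts Ns n C"
    and C: "C > \<alpha>*L/vf"
  shows "Ns = (1/\<beta> + 1/\<gamma>) * (Hm \<alpha> L vf nj C - Hm \<alpha> L vf nj (\<alpha>*L/vf))"
proof -
  define a where "a = \<alpha>*L/vf"
  have a0: "a > 0" unfolding a_def using pos by simp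
  have der: "(Hm \<alpha> L vf nj has_real_derivative Pb \<alpha> L vf nj x) (at x)" if "x \<in> {a..C}" for x
  proof -
    have "Pb \<alpha> L vf nj x = Mf \<alpha> L vf nj x"
      using that C Mf_a[OF pos] unfolding Pb_def a_def[symmetric] by (cases "x = a") auto
    thus ?thesis using Hm_deriv[of x] that a0 by simp
  qed
  have "((\<lambda>t. n t * speed vf nj (n t) / L) has_integral (1/\<beta> + 1/\<gamma>) *
      (Hm \<alpha> L vf nj C - Hm \<alpha> L vf nj a + Hm \<alpha> L vf nj C - Hm \<alpha> L vf nj C)) UNIV" (is "(?g has_integral ?v) UNIV")
  proof (rule assemble[OF b c, where P="Pb \<alpha> L vf nj" and m=C and lo=a and Ha="Hm \<alpha> L vf nj" and Hb="Hm \<alpha> L vf nj"])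
    show "a \<le> C" using C a_def by simp
    show "C \<le> C" by simp
    show "Pb \<alpha> L vf nj x = 0" if "x \<le> a" for x using that unfolding Pb_def a_def by simp
    show "(Hm \<alpha> L vf nj has_real_derivative Pb \<alpha> L vf nj x) (at x)" if "x \<in> {a..C}" for x
      using der that by blast
    show "(Hm \<alpha> L vf nj has_real_derivative Pb \<alpha> L vf nj x) (at x)" if "x \<in> {C..C}" for x
    proof -
      have "x \<in> {a..C}" using that C unfolding a_def by simp
      thus ?thesis by (rule der)
    qed
    show "n t * speed vf nj (n t) / L = Pb \<alpha> L vf nj (C - sched \<beta> \<gamma> ts t)" for t
      by (rule outflow_b[OF pos eq])
  qed
  moreover have "((\<lambda>t. n t * speed vf nj (n t) / L) has_integral Ns) UNIV"
    using eq unfolding bathtub_eq_def by blast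
  ultimately have "Ns = ?v" using has_integral_unique by blast
  thus ?thesis unfolding a_def by simp
qed

lemma p_C_gt_a:
  assumes pos: "\<alpha> > 0" "L > 0" "vf > 0" "nj > 0" and b: "\<beta> > 0" and c: "\<gamma> > 0"
    and eq: "bathtub_eq_p \<alpha> \<beta> \<gamma> L vf nj ts Ns n q C" and Ns: "Ns > 0"
  shows "C > \<alpha>*L/vf"
proof (rule ccontr)
  assume "\<not> C > \<alpha>*L/vf"
  hence z: "n t * speed vf nj (n t) / L = 0" for t
    using outflow_p[OF pos eq, of t] sched_nonneg[OF b c, of ts t] unfolding Pp_def by simp
  have "((\<lambda>t. n t * speed vf nj (n t) / L) has_integral Ns) UNIV"
    using eq unfolding bathtub_eq_p_def by blast
  hence "((\<lambda>t. 0::real) has_integral Ns) UNIV" using z by simp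
  hence "Ns = 0" using has_integral_0 has_integral_unique by blast
  thus False using Ns by simp
qed


lemma ln_ineq: assumes "u > (1::real)" shows "ln u < (u - 1/u)/2"
proof -
  define f where "f x = (x - 1/x)/2 - ln x" for x :: real
  have "f 1 < f u"
  proof (rule DERIV_pos_imp_increasing_open[OF assms])
    fix x :: real assume x: "1 < x" "x < u"
    have "(f has_real_derivative ((1 + 1/x^2)/2 - 1/x)) (at x)"
      unfolding f_def using x by (auto intro!: derivative_eq_intros simp: power2_eq_square field_simps)
    moreover have "(1 + 1/x^2)/2 - 1/x = (1 - 1/x)^2/2" using x by (simp add: power2_eq_square field_simps)
    moreover have "(1 - 1/x)^2/2 > 0" using x by simp
    ultimately show "\<exists>y. (f has_real_derivative y) (at x) \<and> 0 < y" by auto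
  next
    show "continuous_on {1..u} f" unfolding f_def
      by (intro continuous_intros) auto
  qed
  thus ?thesis unfolding f_def by simp
qed

lemma phi_mono: assumes "1 \<le> s" "s \<le> (t::real)" shows "ln s + 1/s \<le> ln t + 1/t"
proof -
  have s0: "s > 0" "t > 0" using assms by auto
  have "ln (s/t) \<le> s/t - 1" using s0 by (intro ln_le_minus_one) simp
  hence "ln t - ln s \<ge> 1 - s/t" using s0 by (simp add: ln_div)
  moreover have "1 - s/t \<ge> 1/s - 1/t"
  proof -
    have "1 - s/t = (t - s)/t" using s0 by (simp add: field_simps)
    moreover have "1/s - 1/t = (t - s)/(s*t)" using s0 by (simp add: field_simps)
    moreover have "(t - s)/(s*t) \<le> (t - s)/t"
    proof -
      have "(t-s)/(s*t) = ((t-s)/t)/s" by simp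
      also have "\<dots> \<le> ((t-s)/t)/1" using assms s0 by (intro divide_left_mono) auto
      also have "\<dots> = (t-s)/t" by simp
      finally show ?thesis .
    qed
    ultimately show ?thesis by simp
  qed
  ultimately show ?thesis by simp
qed


lemma Hm_diff:
  assumes pos: "\<alpha> > 0" "L > 0" "vf > 0" "nj > 0" and C: "C > 0"
  shows "Hm \<alpha> L vf nj C - Hm \<alpha> L vf nj (\<alpha>*L/vf) = nj*\<alpha>*(ln (C/(\<alpha>*L/vf)) + (\<alpha>*L/vf)/C - 1)"
proof -
  define a where "a = \<alpha>*L/vf"
  have a0: "a > 0" unfolding a_def using pos by simp
  have "ln (C/a) = ln C - ln a" using a0 C by (simp add: ln_div)
  have "Hm \<alpha> L vf nj C - Hm \<alpha> L vf nj a = nj*\<alpha>*((ln C - ln a) + a/C - a/a)"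
    unfolding Hm_def a_def[symmetric] by (simp add: algebra_simps)
  also have "\<dots> = nj*\<alpha>*(ln (C/a) + a/C - 1)" using \<open>ln (C/a) = ln C - ln a\<close> a0 by simp
  finally show ?thesis unfolding a_def .
qed

lemma njalpha: assumes "L > 0" "vf > 0" shows "nj*\<alpha> = 4*(\<alpha>*L/vf)*Ip L vf nj"
  unfolding Ip_def using assms by (simp add: field_simps)

theorem proposition3:
  fixes \<alpha> \<beta> \<gamma> L vf nj tstar Ns :: real
  assumes "\<alpha> > 0" "\<beta> > 0" "\<gamma> > 0" "L > 0" "vf > 0" "nj > 0" "Ns > 0"
  shows
    \<comment> \<open>(i) in the controlled regime the equilibrium cost is determined by the closed form\<close>
    "(\<forall>n q C. bathtub_eq_p \<alpha> \<beta> \<gamma> L vf nj tstar Ns n q C \<and> C * vf / (\<alpha> * L) > 2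
        \<longrightarrow> C = Cbp_formula \<alpha> \<beta> \<gamma> L vf nj Ns)
     \<and>
    \<comment> \<open>(ii) monotonicity in n_j and alpha, and the autonomous-vehicle comparison\<close>
     (\<forall>nj1 nj2. 0 < nj1 \<and> nj1 < nj2 \<longrightarrow>
        Cbp_formula \<alpha> \<beta> \<gamma> L vf nj2 Ns < Cbp_formula \<alpha> \<beta> \<gamma> L vf nj1 Ns)
     \<and>
     (\<forall>\<alpha>1 \<alpha>2. 0 < \<alpha>1 \<and> \<alpha>1 < \<alpha>2 \<longrightarrow>
        Cbp_formula \<alpha>1 \<beta> \<gamma> L vf nj Ns < Cbp_formula \<alpha>2 \<beta> \<gamma> L vf nj Ns)
     \<and>
     (\<forall>\<eta> \<xi>. \<beta> / \<alpha> < \<eta> \<and> \<eta> \<le> 1 \<and> 1 \<le> \<xi> \<and> (\<eta>, \<xi>) \<noteq> (1, 1) \<longrightarrow>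
        Cbp_formula (\<eta> * \<alpha>) \<beta> \<gamma> L vf (\<xi> * nj) Ns < Cbp_formula \<alpha> \<beta> \<gamma> L vf nj Ns)
     \<and>
    \<comment> \<open>(iii) hypercongestion mitigation\<close>
     (\<forall>n Cb np q Cp. bathtub_eq \<alpha> \<beta> \<gamma> L vf nj tstar Ns n Cb \<and> Cb * vf / (\<alpha> * L) > 2 \<and>
        bathtub_eq_p \<alpha> \<beta> \<gamma> L vf nj tstar Ns np q Cp \<longrightarrow> Cb > Cp)"
proof -
  note pos = assms(1) assms(4) assms(5) assms(6)
  have b: "\<beta> > 0" and c: "\<gamma> > 0" and Ns0: "Ns > 0" using assms by auto
  define a where "a = \<alpha>*L/vf"
  define I where "I = Ip L vf nj"
  define K where "K = 1/\<beta> + 1/\<gamma>"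
  have a0: "a > 0" unfolding a_def using pos by simp
  have I0: "I > 0" unfolding I_def Ip_def using pos by simp
  have K0: "K > 0" unfolding K_def using b c by (intro add_pos_pos) simp_all
  have KK: "\<beta>*\<gamma>/(\<beta>+\<gamma>) = 1/K" unfolding K_def using b c by (simp add: field_simps)
  have nja: "nj*\<alpha> = 4*a*I" unfolding a_def I_def using pos by (intro njalpha)
  have ln2: "ln 2 < (1::real)" by (rule ln_2_less_1)
  have theta: "C > 2*a" if "C * vf / (\<alpha> * L) > 2" for C
  proof -
    have "C * vf / (\<alpha> * L) = C / a" unfolding a_def by simp
    thus ?thesis using that a0 by (simp add: less_divide_eq mult.commute)
  qed
  have high: "Ns = K * (I * (C + 4*a*ln 2 - 4*a))"
    if eq: "bathtub_eq_p \<alpha> \<beta> \<gamma> L vf nj tstar Ns n q C" and C: "C > 2*a" for n q C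
  proof -
    have N1: "Ns = K * ((Hm \<alpha> L vf nj (2*a) - Hm \<alpha> L vf nj a) + I * C - I * (2*a))"
      using int_p_high[OF pos b c eq] C unfolding K_def a_def I_def by simp
    have D0: "Hm \<alpha> L vf nj (2*a) - Hm \<alpha> L vf nj a = nj*\<alpha>*(ln 2 + 1/2 - 1)"
    proof -
      have "2*a > 0" using a0 by simp
      from Hm_diff[OF pos this, folded a_def] show ?thesis using a0 by simp
    qed
    have D: "Hm \<alpha> L vf nj (2*a) - Hm \<alpha> L vf nj a = 4*a*I*(ln 2 - 1/2)"
      unfolding D0 nja by simp
    have "Ns = K * (4*a*I*(ln 2 - 1/2) + I * C - I * (2*a))" using N1 unfolding D .
    also have "\<dots> = K * (I * (C + 4*a*ln 2 - 4*a))" by (simp add: algebra_simps)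
    finally show ?thesis .
  qed
  have P1: "\<forall>n q C. bathtub_eq_p \<alpha> \<beta> \<gamma> L vf nj tstar Ns n q C \<and> C * vf / (\<alpha> * L) > 2
        \<longrightarrow> C = Cbp_formula \<alpha> \<beta> \<gamma> L vf nj Ns"
  proof (intro allI impI, elim conjE)
    fix n q C assume eq: "bathtub_eq_p \<alpha> \<beta> \<gamma> L vf nj tstar Ns n q C" and th: "C * vf / (\<alpha> * L) > 2"
    have N: "Ns = K * (I * (C + 4*a*ln 2 - 4*a))" using high[OF eq theta[OF th]] .
    have "Cbp_formula \<alpha> \<beta> \<gamma> L vf nj Ns = (1/K) * (Ns / I) + 4*a*(1 - ln 2)"
      unfolding Cbp_formula_def KK I_def[symmetric] a_def by simp
    also have "\<dots> = C"
    proof -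
      define X where "X = C + 4*a*ln 2 - 4*a"
      have "K \<noteq> 0" "I \<noteq> 0" using K0 I0 by auto
      hence "(1/K) * (K * (I * X) / I) = X" by simp
      hence "(1/K) * (Ns / I) = X" unfolding N X_def .
      thus ?thesis unfolding X_def by (simp add: algebra_simps)
    qed
    finally show "C = Cbp_formula \<alpha> \<beta> \<gamma> L vf nj Ns" by simp
  qed
  have NI: "Ns / Ip L vf m = (4*L*Ns/vf) / m" for m
    unfolding Ip_def using pos by (simp add: field_simps)
  have c4: "4*L*Ns/vf > 0" using pos Ns0 by simp
  have bg: "\<beta>*\<gamma>/(\<beta>+\<gamma>) > 0" using b c by simp
  have P2: "\<forall>nj1 nj2. 0 < nj1 \<and> nj1 < nj2 \<longrightarrow>
        Cbp_formula \<alpha> \<beta> \<gamma> L vf nj2 Ns < Cbp_formula \<alpha> \<beta> \<gamma> L vf nj1 Ns"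
  proof (intro allI impI, elim conjE)
    fix nj1 nj2 :: real assume h: "0 < nj1" "nj1 < nj2"
    have "(4*L*Ns/vf) / nj2 < (4*L*Ns/vf) / nj1" using h c4 by (intro divide_strict_left_mono) auto
    hence "\<beta>*\<gamma>/(\<beta>+\<gamma>) * ((4*L*Ns/vf) / nj2) < \<beta>*\<gamma>/(\<beta>+\<gamma>) * ((4*L*Ns/vf) / nj1)"
      by (rule mult_strict_left_mono[OF _ bg])
    thus "Cbp_formula \<alpha> \<beta> \<gamma> L vf nj2 Ns < Cbp_formula \<alpha> \<beta> \<gamma> L vf nj1 Ns"
      unfolding Cbp_formula_def NI by simp
  qed
  have P3: "\<forall>\<alpha>1 \<alpha>2. 0 < \<alpha>1 \<and> \<alpha>1 < \<alpha>2 \<longrightarrow>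
        Cbp_formula \<alpha>1 \<beta> \<gamma> L vf nj Ns < Cbp_formula \<alpha>2 \<beta> \<gamma> L vf nj Ns"
  proof (intro allI impI, elim conjE)
    fix \<alpha>1 \<alpha>2 :: real assume h: "0 < \<alpha>1" "\<alpha>1 < \<alpha>2"
    have "4 * \<alpha>1 * L / vf < 4 * \<alpha>2 * L / vf" using h pos by (simp add: divide_strict_right_mono)
    hence "4 * \<alpha>1 * L / vf * (1 - ln 2) < 4 * \<alpha>2 * L / vf * (1 - ln 2)"
      using ln2 by (intro mult_strict_right_mono) auto
    thus "Cbp_formula \<alpha>1 \<beta> \<gamma> L vf nj Ns < Cbp_formula \<alpha>2 \<beta> \<gamma> L vf nj Ns"
      unfolding Cbp_formula_def by simp
  qed
  have P4: "\<forall>\<eta> \<xi>. \<beta> / \<alpha> < \<eta> \<and> \<eta> \<le> 1 \<and> 1 \<le> \<xi> \<and> (\<eta>, \<xi>) \<noteq> (1, 1) \<longrightarrow>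
        Cbp_formula (\<eta> * \<alpha>) \<beta> \<gamma> L vf (\<xi> * nj) Ns < Cbp_formula \<alpha> \<beta> \<gamma> L vf nj Ns"
  proof (intro allI impI, elim conjE)
    fix \<eta> \<xi> :: real assume h: "\<beta> / \<alpha> < \<eta>" "\<eta> \<le> 1" "1 \<le> \<xi>" "(\<eta>, \<xi>) \<noteq> (1, 1)"
    have e0: "\<eta> > 0" using h(1) b pos by (smt (verit) divide_pos_pos)
    have A: "(4*L*Ns/vf) / (\<xi>*nj) \<le> (4*L*Ns/vf) / nj"
      using h pos c4 by (intro divide_left_mono) auto
    have B: "4 * (\<eta>*\<alpha>) * L / vf \<le> 4 * \<alpha> * L / vf" using h pos e0 by (simp add: divide_right_mono)
    have cases: "\<eta> < 1 \<or> \<xi> > 1" using h by auto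
    show "Cbp_formula (\<eta> * \<alpha>) \<beta> \<gamma> L vf (\<xi> * nj) Ns < Cbp_formula \<alpha> \<beta> \<gamma> L vf nj Ns"
      using cases
    proof
      assume "\<eta> < 1"
      hence "4 * (\<eta>*\<alpha>) * L / vf < 4 * \<alpha> * L / vf" using pos by (simp add: divide_strict_right_mono)
      hence B': "4 * (\<eta>*\<alpha>) * L / vf * (1 - ln 2) < 4 * \<alpha> * L / vf * (1 - ln 2)"
        using ln2 by (intro mult_strict_right_mono) auto
      have "\<beta>*\<gamma>/(\<beta>+\<gamma>) * ((4*L*Ns/vf) / (\<xi>*nj)) \<le> \<beta>*\<gamma>/(\<beta>+\<gamma>) * ((4*L*Ns/vf) / nj)"
        using A bg by (intro mult_left_mono) auto
      thus ?thesis using B' unfolding Cbp_formula_def NI by simp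
    next
      assume "\<xi> > 1"
      hence "(4*L*Ns/vf) / (\<xi>*nj) < (4*L*Ns/vf) / nj"
        using pos c4 by (intro divide_strict_left_mono) auto
      hence A': "\<beta>*\<gamma>/(\<beta>+\<gamma>) * ((4*L*Ns/vf) / (\<xi>*nj)) < \<beta>*\<gamma>/(\<beta>+\<gamma>) * ((4*L*Ns/vf) / nj)"
        by (rule mult_strict_left_mono[OF _ bg])
      have "4 * (\<eta>*\<alpha>) * L / vf * (1 - ln 2) \<le> 4 * \<alpha> * L / vf * (1 - ln 2)"
        using B ln2 by (intro mult_right_mono) auto
      thus ?thesis using A' unfolding Cbp_formula_def NI by simp
    qed
  qed
  have P5: "\<forall>n Cb np q Cp. bathtub_eq \<alpha> \<beta> \<gamma> L vf nj tstar Ns n Cb \<and> Cb * vf / (\<alpha> * L) > 2 \<and>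
        bathtub_eq_p \<alpha> \<beta> \<gamma> L vf nj tstar Ns np q Cp \<longrightarrow> Cb > Cp"
  proof (intro allI impI, elim conjE)
    fix n Cb np q Cp
    assume eqb: "bathtub_eq \<alpha> \<beta> \<gamma> L vf nj tstar Ns n Cb" and th: "Cb * vf / (\<alpha> * L) > 2"
      and eqp: "bathtub_eq_p \<alpha> \<beta> \<gamma> L vf nj tstar Ns np q Cp"
    have Cb2: "Cb > 2*a" using theta[OF th] .
    have Nb: "Ns = K * (nj*\<alpha>*(ln (Cb/a) + a/Cb - 1))"
    proof -
      have Cba: "Cb > a" using Cb2 a0 by simp
      have "Cb > 0" using Cba a0 by simp
      have h1: "Ns = K * (Hm \<alpha> L vf nj Cb - Hm \<alpha> L vf nj a)"
        using int_b[OF pos b c eqb Cba[unfolded a_def]] unfolding K_def a_def .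
      show ?thesis unfolding h1 using Hm_diff[OF pos \<open>Cb > 0\<close>, folded a_def] by simp
    qed
    show "Cb > Cp"
    proof (cases "Cp \<le> 2*a")
      case True thus ?thesis using Cb2 by simp
    next
      case False
      hence Cp2: "Cp > 2*a" by simp
      have Np: "Ns = K * (I * (Cp + 4*a*ln 2 - 4*a))" using high[OF eqp Cp2] .
      show ?thesis
      proof (rule ccontr)
        assume "\<not> Cb > Cp"
        hence le: "Cb \<le> Cp" by simp
        have m: "ln (Cb/a) + 1/(Cb/a) \<le> ln (Cp/a) + 1/(Cp/a)"
          using Cb2 le a0 by (intro phi_mono) (auto simp: divide_right_mono)
        have u1: "Cp/(2*a) > 1" using Cp2 a0 by simp
        have li: "ln (Cp/(2*a)) < (Cp/(2*a) - 1/(Cp/(2*a)))/2" by (rule ln_ineq[OF u1])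
        have lsplit: "ln (Cp/a) = ln 2 + ln (Cp/(2*a))"
        proof -
          have e: "Cp/a = 2 * (Cp/(2*a))" using a0 by simp
          have "ln (2 * (Cp/(2*a))) = ln 2 + ln (Cp/(2*a))" using u1 by (intro ln_mult_pos) auto
          thus ?thesis unfolding e[symmetric] .
        qed
        have "4*a*(ln (Cp/a) + a/Cp - 1) < Cp + 4*a*ln 2 - 4*a"
        proof -
          have "4*a*(ln (Cp/a) + a/Cp - 1) = 4*a*ln 2 + 4*a*ln (Cp/(2*a)) + 4*a*a/Cp - 4*a"
            unfolding lsplit by (simp add: algebra_simps)
          also have "4*a*ln (Cp/(2*a)) < 4*a*((Cp/(2*a) - 1/(Cp/(2*a)))/2)"
            using li a0 by simp
          hence "4*a*ln 2 + 4*a*ln (Cp/(2*a)) + 4*a*a/Cp - 4*a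
              < 4*a*ln 2 + 4*a*((Cp/(2*a) - 1/(Cp/(2*a)))/2) + 4*a*a/Cp - 4*a" by simp
          also have "4*a*((Cp/(2*a) - 1/(Cp/(2*a)))/2) = Cp - 4*a*a/Cp"
            using a0 Cp2 by (simp add: field_simps)
          finally show ?thesis by simp
        qed
        moreover have "ln (Cb/a) + a/Cb - 1 \<le> ln (Cp/a) + a/Cp - 1" using m by simp
        ultimately have "4*a*(ln (Cb/a) + a/Cb - 1) < Cp + 4*a*ln 2 - 4*a"
          using a0 by (smt (verit) mult_left_mono)
        hence "K * (4*a*I*(ln (Cb/a) + a/Cb - 1)) < K * (I * (Cp + 4*a*ln 2 - 4*a))"
          using K0 I0 by (simp add: mult.assoc mult.left_commute)
        thus False using Nb Np unfolding nja by simp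
      qed
    qed
  qed
  show ?thesis using P1 P2 P3 P4 P5 by blast
qed

end
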